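(* Let $G=(V,E,\omega)\in\mathcal{G}$ and $\gamma\geq 0$. Let $\{\tau_k\}_{k\in\mathbb{N}}$ be a sequence of positive real numbers with $\tau_k\to0$ as $k\to\infty$, and let $\{u_k\}_{k\in\mathbb{N}}\subset\mathcal K$ be a sequence for which there is $C>0$ such that $\tilde J_{\tau_k}(u_k)\leq C$ for all $k\in\mathbb{N}$. Then there exist a subsequence $\{u_{k_l}\}_{l\in\mathbb{N}}$ and $u\in\mathcal V^b$ such that $u_{k_l}\to u$ as $l\to\infty$.
   Context: $\mathcal{G}$ is the set of finite, simple, connected, undirected, edge-weighted graphs $G=(V,E,\omega)$ with $V=\{1,\dots,n\}$, $n\geq 2$, weights $\omega_{ij}=\omega_{ji}>0$ for $(i,j)\in E$ and $\omega_{ij}=0$ otherwise. Degrees $d_i=\sum_j\omega_{ij}$. $\mathcal V$: functions $u:V\to\mathbb R$. Fixed $r\in[0,1]$; $\langle u,v\rangle_{\mathcal V}=\sum_i d_i^r u_iv_i$. $(\Delta u)_i=d_i^{-r}\sum_j\omega_{ij}(u_i-u_j)$. $\chi_S$ indicator of $S$. $\mathcal M(u)=\sum_i d_i^ru_i$, $\mathcal A(u)=\frac{\mathcal M(u)}{\sum_i d_i^r}\chi_V$. For $u\in\mathcal V$ let $\varphi$ be the unique solution of $\Delta\varphi=u-\mathcal A(u)$, $\mathcal M(\varphi)=0$, and $Lu:=\Delta u+\gamma\varphi$; $e^{-\tau L}$ its exponential. $\mathcal V^b$: $\{0,1\}$-valued functions; $\mathcal K$: $[0,1]$-valued functions. For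 $\tau>0$, $\tilde J_\tau(u)=\frac1\tau\langle\chi_V-u,e^{-\tau L}u\rangle_{\mathcal V}$ for $u\in\mathcal K$. Convergence in $\mathcal V$ is in the norm induced by $\langle\cdot,\cdot\rangle_{\mathcal V}$. *)

theory Defs
  imports "HOL-Analysis.Analysis"
begin

text \<open>Vertex functions are modelled as nat => real; only values on V matter.\<close>

definition Vset :: "nat \<Rightarrow> nat set" where
  "Vset n = {1..n}"

definition edge_rel :: "nat \<Rightarrow> (nat \<Rightarrow> nat \<Rightarrow> real) \<Rightarrow> (nat \<times> nat) set" where
  "edge_rel n w = {(i,j). i \<in> Vset n \<and> j \<in> Vset n \<and> w i j > 0}"

definition graph_G :: "nat \<Rightarrow> (nat \<Rightarrow> nat \<Rightarrow> real) \<Rightarrow> bool" where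
  "graph_G n w \<longleftrightarrow> n \<ge> 2
     \<and> (\<forall>i j. w i j = w j i)
     \<and> (\<forall>i j. w i j \<ge> 0)
     \<and> (\<forall>i. w i i = 0)
     \<and> (\<forall>i j. (i \<notin> Vset n \<or> j \<notin> Vset n) \<longrightarrow> w i j = 0)
     \<and> (\<forall>i\<in>Vset n. \<forall>j\<in>Vset n. (i, j) \<in> (edge_rel n w)\<^sup>*)"

definition deg :: "nat \<Rightarrow> (nat \<Rightarrow> nat \<Rightarrow> real) \<Rightarrow> nat \<Rightarrow> real" where
  "deg n w i = (\<Sum>j\<in>Vset n. w i j)"

definition inner_V :: "nat \<Rightarrow> (nat \<Rightarrow> nat \<Rightarrow> real) \<Rightarrow> real \<Rightarrow> (nat \<Rightarrow> real) \<Rightarrow> (nat \<Rightarrow> real) \<Rightarrow> real" where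
  "inner_V n w r u v = (\<Sum>i\<in>Vset n. deg n w i powr r * u i * v i)"

definition norm_V :: "nat \<Rightarrow> (nat \<Rightarrow> nat \<Rightarrow> real) \<Rightarrow> real \<Rightarrow> (nat \<Rightarrow> real) \<Rightarrow> real" where
  "norm_V n w r u = sqrt (inner_V n w r u u)"

definition laplace :: "nat \<Rightarrow> (nat \<Rightarrow> nat \<Rightarrow> real) \<Rightarrow> real \<Rightarrow> (nat \<Rightarrow> real) \<Rightarrow> nat \<Rightarrow> real" where
  "laplace n w r u i = (if i \<in> Vset n then
      deg n w i powr (-r) * (\<Sum>j\<in>Vset n. w i j * (u i - u j)) else 0)"

definition mass :: "nat \<Rightarrow> (nat \<Rightarrow> nat \<Rightarrow> real) \<Rightarrow> real \<Rightarrow> (nat \<Rightarrow> real) \<Rightarrow> real" where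
  "mass n w r u = (\<Sum>i\<in>Vset n. deg n w i powr r * u i)"

definition indic_V :: "nat \<Rightarrow> nat \<Rightarrow> real" where
  "indic_V n i = (if i \<in> Vset n then 1 else 0)"

definition avg :: "nat \<Rightarrow> (nat \<Rightarrow> nat \<Rightarrow> real) \<Rightarrow> real \<Rightarrow> (nat \<Rightarrow> real) \<Rightarrow> nat \<Rightarrow> real" where
  "avg n w r u i = mass n w r u / (\<Sum>j\<in>Vset n. deg n w j powr r) * indic_V n i"

definition phi_sol :: "nat \<Rightarrow> (nat \<Rightarrow> nat \<Rightarrow> real) \<Rightarrow> real \<Rightarrow> (nat \<Rightarrow> real) \<Rightarrow> nat \<Rightarrow> real" where
  "phi_sol n w r u = (THE \<phi>. (\<forall>i\<in>Vset n. laplace n w r \<phi> i = u i - avg n w r u i)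
       \<and> mass n w r \<phi> = 0 \<and> (\<forall>i. i \<notin> Vset n \<longrightarrow> \<phi> i = 0))"

definition Lop :: "nat \<Rightarrow> (nat \<Rightarrow> nat \<Rightarrow> real) \<Rightarrow> real \<Rightarrow> real \<Rightarrow> (nat \<Rightarrow> real) \<Rightarrow> nat \<Rightarrow> real" where
  "Lop n w r \<gamma> u i = laplace n w r u i + \<gamma> * phi_sol n w r u i"

definition expL :: "nat \<Rightarrow> (nat \<Rightarrow> nat \<Rightarrow> real) \<Rightarrow> real \<Rightarrow> real \<Rightarrow> real \<Rightarrow> (nat \<Rightarrow> real) \<Rightarrow> nat \<Rightarrow> real" where
  "expL n w r \<gamma> \<tau> u i = (\<Sum>m. ((- \<tau>) ^ m / fact m) * ((Lop n w r \<gamma> ^^ m) u) i)"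

definition J_tilde :: "nat \<Rightarrow> (nat \<Rightarrow> nat \<Rightarrow> real) \<Rightarrow> real \<Rightarrow> real \<Rightarrow> real \<Rightarrow> (nat \<Rightarrow> real) \<Rightarrow> real" where
  "J_tilde n w r \<gamma> \<tau> u = (1 / \<tau>) * inner_V n w r (\<lambda>i. indic_V n i - u i) (expL n w r \<gamma> \<tau> u)"

definition K_set :: "nat \<Rightarrow> (nat \<Rightarrow> real) set" where
  "K_set n = {u. \<forall>i\<in>Vset n. 0 \<le> u i \<and> u i \<le> 1}"

definition Vb_set :: "nat \<Rightarrow> (nat \<Rightarrow> real) set" where
  "Vb_set n = {u. \<forall>i\<in>Vset n. u i = 0 \<or> u i = 1}"

end

theory Submission
  imports Defs "Jordan_Normal_Form.Determinant"
begin


lemma square_inj_surj: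
  fixes a :: "nat \<Rightarrow> nat \<Rightarrow> real" and n :: nat
  assumes inj: "\<And>\<phi>. (\<forall>i\<in>{1..n}. (\<Sum>j\<in>{1..n}. a i j * \<phi> j) = 0) \<Longrightarrow> (\<forall>j\<in>{1..n}. \<phi> j = 0)"
  shows "\<exists>\<phi>. \<forall>i\<in>{1..n}. (\<Sum>j\<in>{1..n}. a i j * \<phi> j) = b i"
proof -
  define A :: "real mat" where "A = mat n n (\<lambda>(i,j). a (Suc i) (Suc j))"
  have A: "A \<in> carrier_mat n n" by (simp add: A_def)
  have sumeq: "(\<Sum>j\<in>{1..n}. a (Suc i) j * f j) = (\<Sum>j<n. a (Suc i) (Suc j) * f (Suc j))" for i f
    by (rule sum.reindex_bij_witness[of _ Suc "\<lambda>j. j - 1"]) auto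
  have mv: "vec_index (A *\<^sub>v v) i = (\<Sum>j<n. a (Suc i) (Suc j) * vec_index v j)" if "i < n" "v \<in> carrier_vec n" for i v
    using that by (simp add: A_def scalar_prod_def row_def atLeast0LessThan)
  have "det A \<noteq> 0"
  proof
    assume "det A = 0"
    then obtain v where v: "v \<in> carrier_vec n" "v \<noteq> 0\<^sub>v n" "A *\<^sub>v v = 0\<^sub>v n"
      using det_0_iff_vec_prod_zero_field[OF A] by auto
    define \<phi> where "\<phi> j = vec_index v (j - 1)" for j
    have "\<forall>i\<in>{1..n}. (\<Sum>j\<in>{1..n}. a i j * \<phi> j) = 0"
    proof
      fix i assume i: "i \<in> {1..n}"
      then obtain i' where i': "i = Suc i'" "i' < n" by (cases i) auto
      have "vec_index (A *\<^sub>v v) i' = 0" using v i' by simp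
      then show "(\<Sum>j\<in>{1..n}. a i j * \<phi> j) = 0" using mv[OF i'(2) v(1)] i' sumeq[of i' \<phi>]
        by (simp add: \<phi>_def)
    qed
    from inj[OF this] have "\<forall>j<n. vec_index v j = 0" unfolding \<phi>_def
      by (metis One_nat_def Suc_leI atLeastAtMost_iff diff_Suc_1 le_add1 less_Suc_eq_le plus_1_eq_Suc zero_less_Suc)
    then have "v = 0\<^sub>v n" using v(1) by (intro eq_vecI) auto
    with v(2) show False by simp
  qed
  from det_non_zero_imp_unit[OF A this, unfolded Units_def, of "()"]
  obtain B where B: "B \<in> carrier_mat n n" and AB: "A * B = 1\<^sub>m n"
    by (auto simp: ring_mat_def)
  define bv where "bv = Matrix.vec n (\<lambda>i. b (Suc i))"
  define x where "x = B *\<^sub>v bv"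
  have x: "x \<in> carrier_vec n" using B by (simp add: x_def bv_def)
  have Ax: "A *\<^sub>v x = bv"
    unfolding x_def using A B AB
    by (metis assoc_mult_mat_vec bv_def one_mult_mat_vec vec_carrier)
  define \<phi> where "\<phi> j = vec_index x (j - 1)" for j
  show ?thesis
  proof (intro exI ballI)
    fix i assume i: "i \<in> {1..n}"
    then obtain i' where i': "i = Suc i'" "i' < n" by (cases i) auto
    have "vec_index (A *\<^sub>v x) i' = b i" using Ax i' by (simp add: bv_def)
    then show "(\<Sum>j\<in>{1..n}. a i j * \<phi> j) = b i" using mv[OF i'(2) x] i' sumeq[of i' \<phi>]
      by (simp add: \<phi>_def)
  qed
qed


lemma finite_subseq_conv:
  fixes f :: "nat \<Rightarrow> nat \<Rightarrow> real"
  assumes "finite I" and bd: "\<And>k i. i \<in> I \<Longrightarrow> \<bar>f k i\<bar> \<le> B"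
  shows "\<exists>s g. strict_mono s \<and> (\<forall>i\<in>I. (\<lambda>l. f (s l) i) \<longlonglongrightarrow> g i)"
  using assms(1) bd
proof (induction I rule: finite_induct)
  case empty
  show ?case by (rule exI[of _ id]) (auto simp: strict_mono_def)
next
  case (insert x I)
  then obtain s g where s: "strict_mono s" and g: "\<forall>i\<in>I. (\<lambda>l. f (s l) i) \<longlonglongrightarrow> g i"
    by blast
  have "bounded (range (\<lambda>l. f (s l) x))"
    using insert.prems by (intro boundedI[of _ B]) auto
  then obtain lx r where r: "strict_mono r" and lx: "((\<lambda>l. f (s l) x) \<circ> r) \<longlonglongrightarrow> lx"
    using bounded_imp_convergent_subsequence by blast
  show ?case
  proof (intro exI conjI ballI)
    show "strict_mono (s \<circ> r)" using s r by (rule strict_mono_o)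
    fix i assume "i \<in> insert x I"
    show "(\<lambda>l. f ((s \<circ> r) l) i) \<longlonglongrightarrow> (g(x := lx)) i"
    proof (cases "i = x")
      case True then show ?thesis using lx by (simp add: o_def)
    next
      case False
      then have "i \<in> I" using \<open>i \<in> insert x I\<close> by auto
      from LIMSEQ_subseq_LIMSEQ[OF g[rule_format, OF this] r] False show ?thesis
        by (simp add: o_def)
    qed
  qed
qed

context
  fixes n :: nat and w :: "nat \<Rightarrow> nat \<Rightarrow> real" and r :: real
  assumes G: "graph_G n w"
begin

lemma finV: "finite (Vset n)" by (simp add: Vset_def)

lemma w_nonneg: "w i j \<ge> 0" using G by (simp add: graph_G_def)
lemma w_sym: "w i j = w j i" using G by (simp add: graph_G_def)

lemma deg_pos: assumes i: "i \<in> Vset n" shows "deg n w i > 0"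
proof -
  have n2: "n \<ge> 2" using G by (simp add: graph_G_def)
  define j where "j = (if i = 1 then 2 else 1::nat)"
  have j: "j \<in> Vset n" "j \<noteq> i" using n2 i by (auto simp: j_def Vset_def)
  have "(i, j) \<in> (edge_rel n w)\<^sup>*" using G i j by (simp add: graph_G_def)
  then obtain k where "(i, k) \<in> edge_rel n w"
    using j(2) by (metis converse_rtranclE)
  then have k: "k \<in> Vset n" "w i k > 0" by (auto simp: edge_rel_def)
  have "w i k \<le> deg n w i" unfolding deg_def
    using k finV by (intro member_le_sum) (auto simp: w_nonneg)
  then show ?thesis using k by simp
qed

lemma dpow_pos: assumes "i \<in> Vset n" shows "deg n w i powr r > 0"
  using deg_pos[OF assms] by simp

lemma dpow_inv: assumes "i \<in> Vset n" shows "deg n w i powr r * deg n w i powr (-r) = 1"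
  using deg_pos[OF assms] by (simp add: powr_minus field_simps)

lemma sumd_pos: "(\<Sum>j\<in>Vset n. deg n w j powr r) > 0"
proof -
  have "Vset n \<noteq> {}" using G by (auto simp: graph_G_def Vset_def)
  then show ?thesis using finV dpow_pos by (intro sum_pos) auto
qed

lemma lap_weighted: "(\<Sum>i\<in>Vset n. deg n w i powr r * laplace n w r \<phi> i)
   = (\<Sum>i\<in>Vset n. \<Sum>j\<in>Vset n. w i j * (\<phi> i - \<phi> j))"
  by (rule sum.cong) (auto simp: laplace_def mult.assoc[symmetric] dpow_inv)

lemma lap_weighted_phi: "(\<Sum>i\<in>Vset n. deg n w i powr r * \<phi> i * laplace n w r \<phi> i)
   = (\<Sum>i\<in>Vset n. \<Sum>j\<in>Vset n. w i j * \<phi> i * (\<phi> i - \<phi> j))"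
proof (rule sum.cong[OF refl])
  fix i assume i: "i \<in> Vset n"
  have "deg n w i powr r * \<phi> i * laplace n w r \<phi> i
      = (deg n w i powr r * deg n w i powr (-r)) * \<phi> i * (\<Sum>j\<in>Vset n. w i j * (\<phi> i - \<phi> j))"
    using i by (simp add: laplace_def)
  also have "\<dots> = (\<Sum>j\<in>Vset n. w i j * \<phi> i * (\<phi> i - \<phi> j))"
    using i by (simp add: dpow_inv sum_distrib_left algebra_simps)
  finally show "deg n w i powr r * \<phi> i * laplace n w r \<phi> i = (\<Sum>j\<in>Vset n. w i j * \<phi> i * (\<phi> i - \<phi> j))" .
qed

lemma lap_sum_zero: "(\<Sum>i\<in>Vset n. deg n w i powr r * laplace n w r \<phi> i) = 0"
proof -
  let ?S = "(\<Sum>i\<in>Vset n. \<Sum>j\<in>Vset n. w i j * (\<phi> i - \<phi> j))"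
  have 1: "?S = (\<Sum>i\<in>Vset n. \<Sum>j\<in>Vset n. w j i * (\<phi> j - \<phi> i))" by (rule sum.swap)
  have 2: "(\<Sum>i\<in>Vset n. \<Sum>j\<in>Vset n. w j i * (\<phi> j - \<phi> i)) = - ?S"
    by (simp add: sum_negf[symmetric] w_sym algebra_simps)
  have "?S = 0" using 1 2 by linarith
  then show ?thesis by (simp add: lap_weighted)
qed

lemma energy: "2 * (\<Sum>i\<in>Vset n. deg n w i powr r * \<phi> i * laplace n w r \<phi> i)
   = (\<Sum>i\<in>Vset n. \<Sum>j\<in>Vset n. w i j * (\<phi> i - \<phi> j)^2)"
proof -
  let ?S = "(\<Sum>i\<in>Vset n. \<Sum>j\<in>Vset n. w i j * \<phi> i * (\<phi> i - \<phi> j))"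
  have "?S = (\<Sum>j\<in>Vset n. \<Sum>i\<in>Vset n. w i j * \<phi> i * (\<phi> i - \<phi> j))" by (rule sum.swap)
  also have "\<dots> = (\<Sum>i\<in>Vset n. \<Sum>j\<in>Vset n. w i j * \<phi> j * (\<phi> j - \<phi> i))"
    by (simp add: w_sym)
  finally have "2 * ?S = ?S + (\<Sum>i\<in>Vset n. \<Sum>j\<in>Vset n. w i j * \<phi> j * (\<phi> j - \<phi> i))" by simp
  also have "\<dots> = (\<Sum>i\<in>Vset n. \<Sum>j\<in>Vset n. w i j * (\<phi> i - \<phi> j)^2)"
    by (simp add: sum.distrib[symmetric] power2_eq_square algebra_simps)
  finally show ?thesis by (simp add: lap_weighted_phi)
qed

lemma harmonic_const:
  assumes h: "\<forall>i\<in>Vset n. laplace n w r \<phi> i = 0" and i: "i \<in> Vset n" and j: "j \<in> Vset n"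
  shows "\<phi> i = \<phi> j"
proof -
  have "(\<Sum>i\<in>Vset n. \<Sum>j\<in>Vset n. w i j * (\<phi> i - \<phi> j)^2) = 0"
    using energy[of \<phi>] h by simp
  then have z: "\<forall>i\<in>Vset n. \<forall>j\<in>Vset n. w i j * (\<phi> i - \<phi> j)^2 = 0"
    using finV by (subst (asm) sum_nonneg_eq_0_iff) (auto intro!: sum_nonneg simp: w_nonneg sum_nonneg_eq_0_iff)
  have e: "\<phi> a = \<phi> b" if "(a, b) \<in> edge_rel n w" for a b
  proof -
    have ab: "a \<in> Vset n" "b \<in> Vset n" "w a b > 0" using that by (auto simp: edge_rel_def)
    then have "w a b * (\<phi> a - \<phi> b)^2 = 0" using z by blast
    then show ?thesis using ab by simp
  qed
  have "(i, j) \<in> (edge_rel n w)\<^sup>*" using G i j by (simp add: graph_G_def)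
  then show ?thesis
    by (induction rule: rtrancl_induct) (auto dest: e)
qed

end


definition Pphi where
  "Pphi n w r u \<phi> \<longleftrightarrow> (\<forall>i\<in>Vset n. laplace n w r \<phi> i = u i - avg n w r u i)
       \<and> mass n w r \<phi> = 0 \<and> (\<forall>i. i \<notin> Vset n \<longrightarrow> \<phi> i = 0)"

definition ee :: "nat \<Rightarrow> nat \<Rightarrow> real" where "ee j k = (if k = j then 1 else 0)"

definition N1 :: "nat \<Rightarrow> (nat \<Rightarrow> real) \<Rightarrow> real" where "N1 n v = (\<Sum>i\<in>Vset n. \<bar>v i\<bar>)"

context
  fixes n :: nat and w :: "nat \<Rightarrow> nat \<Rightarrow> real" and r :: real
  assumes G: "graph_G n w"
begin

definition cc where "cc i j = deg n w i powr (-r) * ((if i = j then deg n w i else 0) - w i j)"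

lemma lap_coef: assumes i: "i \<in> Vset n"
  shows "laplace n w r \<phi> i = (\<Sum>j\<in>Vset n. cc i j * \<phi> j)"
proof -
  have "(\<Sum>j\<in>Vset n. cc i j * \<phi> j) = deg n w i powr (-r) *
     ((\<Sum>j\<in>Vset n. (if i = j then deg n w i else 0) * \<phi> j) - (\<Sum>j\<in>Vset n. w i j * \<phi> j))"
    by (simp add: cc_def sum_distrib_left sum_subtractf[symmetric] algebra_simps)
  also have "(\<Sum>j\<in>Vset n. (if i = j then deg n w i else 0) * \<phi> j) = deg n w i * \<phi> i"
  proof -
    have "(\<Sum>j\<in>Vset n. (if i = j then deg n w i else 0) * \<phi> j)
        = (\<Sum>j\<in>Vset n. if i = j then deg n w i * \<phi> j else 0)" by (intro sum.cong) auto
    also have "\<dots> = deg n w i * \<phi> i" using i finV[OF G] by simp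
    finally show ?thesis .
  qed
  finally show ?thesis using i
    by (simp add: laplace_def deg_def sum_distrib_right sum_subtractf right_diff_distrib)
qed

lemma lap_cong: "(\<forall>k\<in>Vset n. \<phi> k = \<psi> k) \<Longrightarrow> laplace n w r \<phi> i = laplace n w r \<psi> i"
  by (simp add: laplace_def)

lemma mass_cong: "(\<forall>k\<in>Vset n. \<phi> k = \<psi> k) \<Longrightarrow> mass n w r \<phi> = mass n w r \<psi>"
  by (simp add: mass_def)

lemma lap_lin: "laplace n w r (\<lambda>k. \<Sum>j\<in>A. f j * \<psi> j k) i = (\<Sum>j\<in>A. f j * laplace n w r (\<psi> j) i)"
proof (cases "i \<in> Vset n")
  case True
  have "laplace n w r (\<lambda>k. \<Sum>j\<in>A. f j * \<psi> j k) i = (\<Sum>k\<in>Vset n. cc i k * (\<Sum>j\<in>A. f j * \<psi> j k))"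
    using lap_coef[OF True] .
  also have "\<dots> = (\<Sum>k\<in>Vset n. \<Sum>j\<in>A. f j * (cc i k * \<psi> j k))"
    by (simp add: sum_distrib_left mult.left_commute)
  also have "\<dots> = (\<Sum>j\<in>A. \<Sum>k\<in>Vset n. f j * (cc i k * \<psi> j k))"
    by (rule sum.swap)
  also have "\<dots> = (\<Sum>j\<in>A. f j * (\<Sum>k\<in>Vset n. cc i k * \<psi> j k))"
    by (simp add: sum_distrib_left)
  also have "\<dots> = (\<Sum>j\<in>A. f j * laplace n w r (\<psi> j) i)"
    using lap_coef[OF True] by simp
  finally show ?thesis .
qed (simp add: laplace_def)

lemma mass_lin: "mass n w r (\<lambda>k. \<Sum>j\<in>A. f j * \<psi> j k) = (\<Sum>j\<in>A. f j * mass n w r (\<psi> j))"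
proof -
  have "mass n w r (\<lambda>k. \<Sum>j\<in>A. f j * \<psi> j k) = (\<Sum>k\<in>Vset n. \<Sum>j\<in>A. f j * (deg n w k powr r * \<psi> j k))"
    by (simp add: mass_def sum_distrib_left mult.left_commute)
  also have "\<dots> = (\<Sum>j\<in>A. \<Sum>k\<in>Vset n. f j * (deg n w k powr r * \<psi> j k))"
    by (rule sum.swap)
  also have "\<dots> = (\<Sum>j\<in>A. f j * mass n w r (\<psi> j))"
    by (simp add: mass_def sum_distrib_left)
  finally show ?thesis .
qed

lemma mass_const: "(\<forall>k\<in>Vset n. \<phi> k = c) \<Longrightarrow> mass n w r \<phi> = c * (\<Sum>j\<in>Vset n. deg n w j powr r)"
  by (simp add: mass_def sum_distrib_left mult.commute)

lemma const_mass0: assumes "\<forall>i\<in>Vset n. laplace n w r \<phi> i = 0" "mass n w r \<phi> = 0" "i \<in> Vset n"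
  shows "\<phi> i = 0"
proof -
  have "\<forall>k\<in>Vset n. \<phi> k = \<phi> i" using harmonic_const[OF G assms(1) _ assms(3)] by blast
  from mass_const[OF this] assms(2) sumd_pos[OF G, of r] show ?thesis by simp
qed

lemma weighted_avg0: "(\<Sum>i\<in>Vset n. deg n w i powr r * (u i - avg n w r u i)) = 0"
proof -
  define S where "S = (\<Sum>j\<in>Vset n. deg n w j powr r)"
  define m where "m = mass n w r u"
  have "(\<Sum>i\<in>Vset n. deg n w i powr r * (u i - avg n w r u i))
     = (\<Sum>i\<in>Vset n. deg n w i powr r * u i - m / S * deg n w i powr r)"
    by (intro sum.cong) (auto simp: avg_def indic_V_def m_def S_def algebra_simps)
  also have "\<dots> = (\<Sum>i\<in>Vset n. deg n w i powr r * u i) - m / S * S"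
    by (simp add: sum_subtractf sum_distrib_left S_def)
  also have "\<dots> = m - m / S * S"
    by (simp add: m_def mass_def)
  also have "\<dots> = 0" using sumd_pos[OF G, of r] by (simp add: S_def)
  finally show ?thesis .
qed

lemma Pphi_unique: assumes "Pphi n w r u \<phi>1" "Pphi n w r u \<phi>2" shows "\<phi>1 = \<phi>2"
proof
  fix i
  let ?d = "\<lambda>k. \<phi>1 k - \<phi>2 k"
  show "\<phi>1 i = \<phi>2 i"
  proof (cases "i \<in> Vset n")
    case True
    have "laplace n w r ?d k = laplace n w r \<phi>1 k - laplace n w r \<phi>2 k" if "k \<in> Vset n" for k
      by (simp add: lap_coef[OF that] right_diff_distrib sum_subtractf)
    then have "\<forall>k\<in>Vset n. laplace n w r ?d k = 0"
      using assms by (simp add: Pphi_def)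
    moreover have "mass n w r ?d = 0"
      using assms by (simp add: Pphi_def mass_def sum_subtractf right_diff_distrib)
    ultimately have "?d i = 0" using const_mass0 True by blast
    then show ?thesis by simp
  next
    case False then show ?thesis using assms by (simp add: Pphi_def)
  qed
qed

lemma Pphi_exists: "\<exists>\<phi>. Pphi n w r u \<phi>"
proof -
  define a where "a i j = cc i j + deg n w j powr r" for i j
  have rep: "(\<Sum>j\<in>Vset n. a i j * \<phi> j) = laplace n w r \<phi> i + mass n w r \<phi>" if "i \<in> Vset n" for i \<phi>
    using lap_coef[OF that] by (simp add: a_def mass_def sum.distrib algebra_simps)
  have "\<exists>\<phi>. \<forall>i\<in>{1..n}. (\<Sum>j\<in>{1..n}. a i j * \<phi> j) = u i - avg n w r u i"
  proof (rule square_inj_surj)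
    fix \<phi> assume h: "\<forall>i\<in>{1..n}. (\<Sum>j\<in>{1..n}. a i j * \<phi> j) = 0"
    then have h': "\<forall>i\<in>Vset n. laplace n w r \<phi> i + mass n w r \<phi> = 0"
      using rep by (simp add: Vset_def)
    have "(\<Sum>i\<in>Vset n. deg n w i powr r * (laplace n w r \<phi> i + mass n w r \<phi>)) = 0"
      using h' by simp
    then have "(\<Sum>i\<in>Vset n. deg n w i powr r) * mass n w r \<phi> = 0"
      using lap_sum_zero[OF G, of r \<phi>]
      by (simp add: distrib_left sum.distrib sum_distrib_right[symmetric])
    then have m0: "mass n w r \<phi> = 0" using sumd_pos[OF G, of r] by simp
    then have "\<forall>i\<in>Vset n. laplace n w r \<phi> i = 0" using h' by simp
    then show "\<forall>j\<in>{1..n}. \<phi> j = 0" using const_mass0 m0 by (simp add: Vset_def)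
  qed
  then obtain \<phi>0 where \<phi>0: "\<forall>i\<in>Vset n. laplace n w r \<phi>0 i + mass n w r \<phi>0 = u i - avg n w r u i"
    using rep by (auto simp: Vset_def)
  define \<phi> where "\<phi> i = (if i \<in> Vset n then \<phi>0 i else 0)" for i
  have eqV: "\<forall>k\<in>Vset n. \<phi> k = \<phi>0 k" by (simp add: \<phi>_def)
  have "(\<Sum>i\<in>Vset n. deg n w i powr r * (laplace n w r \<phi>0 i + mass n w r \<phi>0)) = 0"
    using \<phi>0 weighted_avg0 by simp
  then have "(\<Sum>i\<in>Vset n. deg n w i powr r) * mass n w r \<phi>0 = 0"
    using lap_sum_zero[OF G, of r \<phi>0]
    by (simp add: distrib_left sum.distrib sum_distrib_right[symmetric])
  then have m0: "mass n w r \<phi>0 = 0" using sumd_pos[OF G, of r] by simp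
  show ?thesis
  proof (intro exI)
    show "Pphi n w r u \<phi>"
      unfolding Pphi_def
    proof (intro conjI)
      show "\<forall>i\<in>Vset n. laplace n w r \<phi> i = u i - avg n w r u i"
        using \<phi>0 m0 lap_cong[OF eqV] by simp
      show "mass n w r \<phi> = 0" using m0 mass_cong[OF eqV] by simp
      show "\<forall>i. i \<notin> Vset n \<longrightarrow> \<phi> i = 0" by (simp add: \<phi>_def)
    qed
  qed
qed

lemma phi_P: "Pphi n w r u (phi_sol n w r u)"
proof -
  have "\<exists>!\<phi>. Pphi n w r u \<phi>" using Pphi_exists Pphi_unique by blast
  then have "Pphi n w r u (THE \<phi>. Pphi n w r u \<phi>)" by (rule theI')
  then show ?thesis unfolding phi_sol_def Pphi_def by simp
qed

lemma sum_ee: "i \<in> Vset n \<Longrightarrow> (\<Sum>j\<in>Vset n. u j * ee j i) = u i"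
proof -
  assume i: "i \<in> Vset n"
  have "(\<Sum>j\<in>Vset n. u j * ee j i) = (\<Sum>j\<in>Vset n. if j = i then u j else 0)"
    by (intro sum.cong) (auto simp: ee_def)
  also have "\<dots> = u i" using i finV[OF G] by simp
  finally show ?thesis .
qed

lemma phi_lin: "phi_sol n w r u = (\<lambda>i. \<Sum>j\<in>Vset n. u j * phi_sol n w r (ee j) i)"
proof (rule Pphi_unique[OF phi_P])
  let ?p = "\<lambda>j. phi_sol n w r (ee j)"
  have P: "Pphi n w r (ee j) (?p j)" for j by (rule phi_P)
  have mee: "mass n w r (ee j) = (if j \<in> Vset n then deg n w j powr r else 0)" for j
  proof -
    have "mass n w r (ee j) = (\<Sum>k\<in>Vset n. if k = j then deg n w k powr r else 0)"
      unfolding mass_def by (intro sum.cong) (auto simp: ee_def)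
    also have "\<dots> = (if j \<in> Vset n then deg n w j powr r else 0)" using finV[OF G] by simp
    finally show ?thesis .
  qed
  show "Pphi n w r u (\<lambda>i. \<Sum>j\<in>Vset n. u j * ?p j i)"
    unfolding Pphi_def
  proof (intro conjI ballI allI impI)
    fix i assume i: "i \<in> Vset n"
    have "laplace n w r (\<lambda>k. \<Sum>j\<in>Vset n. u j * ?p j k) i = (\<Sum>j\<in>Vset n. u j * (ee j i - avg n w r (ee j) i))"
      using P i by (simp add: lap_lin Pphi_def)
    also have "\<dots> = u i - (\<Sum>j\<in>Vset n. u j * avg n w r (ee j) i)"
      using sum_ee[OF i] by (simp add: right_diff_distrib sum_subtractf)
    also have "(\<Sum>j\<in>Vset n. u j * avg n w r (ee j) i) = avg n w r u i"
    proof -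
      have "(\<Sum>j\<in>Vset n. u j * avg n w r (ee j) i)
          = (\<Sum>j\<in>Vset n. deg n w j powr r * u j / (\<Sum>j\<in>Vset n. deg n w j powr r))"
        using i by (intro sum.cong) (auto simp: avg_def mee indic_V_def)
      also have "\<dots> = avg n w r u i"
        using i by (simp add: avg_def indic_V_def mass_def sum_divide_distrib)
      finally show ?thesis .
    qed
    finally show "laplace n w r (\<lambda>k. \<Sum>j\<in>Vset n. u j * ?p j k) i = u i - avg n w r u i" .
  next
    show "mass n w r (\<lambda>k. \<Sum>j\<in>Vset n. u j * ?p j k) = 0"
      using P by (simp add: mass_lin Pphi_def)
  next
    fix i assume "i \<notin> Vset n"
    then show "(\<Sum>j\<in>Vset n. u j * ?p j i) = 0" using P by (simp add: Pphi_def)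
  qed
qed

lemma Lop_lin: assumes i: "i \<in> Vset n"
  shows "Lop n w r \<gamma> u i = (\<Sum>j\<in>Vset n. u j * Lop n w r \<gamma> (ee j) i)"
proof -
  have "laplace n w r u i = laplace n w r (\<lambda>k. \<Sum>j\<in>Vset n. u j * ee j k) i"
    by (rule lap_cong) (simp add: sum_ee)
  also have "\<dots> = (\<Sum>j\<in>Vset n. u j * laplace n w r (ee j) i)" by (rule lap_lin)
  finally have "laplace n w r u i = (\<Sum>j\<in>Vset n. u j * laplace n w r (ee j) i)" .
  moreover have "phi_sol n w r u i = (\<Sum>j\<in>Vset n. u j * phi_sol n w r (ee j) i)"
    using fun_cong[OF phi_lin[of u], of i] by simp
  ultimately show ?thesis
    by (simp add: Lop_def sum.distrib algebra_simps sum_distrib_left)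
qed

lemma N1_ge: "i \<in> Vset n \<Longrightarrow> \<bar>v i\<bar> \<le> N1 n v"
  unfolding N1_def using finV[OF G] by (intro member_le_sum) auto

lemma N1_nonneg: "N1 n v \<ge> 0" unfolding N1_def by (simp add: sum_nonneg)

definition MM where "MM \<gamma> = (\<Sum>i\<in>Vset n. \<Sum>j\<in>Vset n. \<bar>Lop n w r \<gamma> (ee j) i\<bar>)"

lemma MM_nonneg: "MM \<gamma> \<ge> 0" unfolding MM_def by (simp add: sum_nonneg)

lemma N1_Lop: "N1 n (Lop n w r \<gamma> u) \<le> MM \<gamma> * N1 n u"
proof -
  have "\<bar>Lop n w r \<gamma> u i\<bar> \<le> N1 n u * (\<Sum>j\<in>Vset n. \<bar>Lop n w r \<gamma> (ee j) i\<bar>)" if i: "i \<in> Vset n" for i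
  proof -
    have "\<bar>Lop n w r \<gamma> u i\<bar> \<le> (\<Sum>j\<in>Vset n. \<bar>u j\<bar> * \<bar>Lop n w r \<gamma> (ee j) i\<bar>)"
      by (subst Lop_lin[OF i]) (rule order_trans[OF sum_abs], simp add: abs_mult)
    also have "\<dots> \<le> (\<Sum>j\<in>Vset n. N1 n u * \<bar>Lop n w r \<gamma> (ee j) i\<bar>)"
      by (intro sum_mono mult_right_mono N1_ge) auto
    finally show ?thesis by (simp add: sum_distrib_left)
  qed
  then have "N1 n (Lop n w r \<gamma> u) \<le> (\<Sum>i\<in>Vset n. N1 n u * (\<Sum>j\<in>Vset n. \<bar>Lop n w r \<gamma> (ee j) i\<bar>))"
    unfolding N1_def by (intro sum_mono) auto
  then show ?thesis by (simp add: MM_def sum_distrib_left mult.commute)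
qed

lemma N1_iter: "N1 n ((Lop n w r \<gamma> ^^ m) u) \<le> MM \<gamma> ^ m * N1 n u"
proof (induction m)
  case 0 then show ?case by simp
next
  case (Suc m)
  have "N1 n ((Lop n w r \<gamma> ^^ Suc m) u) \<le> MM \<gamma> * N1 n ((Lop n w r \<gamma> ^^ m) u)"
    by (simp add: N1_Lop)
  also have "\<dots> \<le> MM \<gamma> * (MM \<gamma> ^ m * N1 n u)"
    by (intro mult_left_mono Suc.IH MM_nonneg)
  finally show ?case by (simp add: algebra_simps)
qed

end


lemma expL_close:
  assumes G: "graph_G n w" and i: "i \<in> Vset n" and tau: "\<tau> \<ge> 0"
  shows "\<bar>expL n w r \<gamma> \<tau> u i - u i\<bar> \<le> (exp (\<tau> * MM n w r \<gamma>) - 1) * N1 n u"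
proof -
  define M where "M = MM n w r \<gamma>"
  define t where "t m = ((- \<tau>) ^ m / fact m) * ((Lop n w r \<gamma> ^^ m) u) i" for m
  define g where "g m = (\<tau> * M) ^ m / fact m * N1 n u" for m
  have M0: "M \<ge> 0" unfolding M_def by (rule MM_nonneg[OF G])
  have tg: "\<bar>t m\<bar> \<le> g m" for m
  proof -
    have "\<bar>((Lop n w r \<gamma> ^^ m) u) i\<bar> \<le> N1 n ((Lop n w r \<gamma> ^^ m) u)" by (rule N1_ge[OF G i])
    also have "\<dots> \<le> M ^ m * N1 n u" unfolding M_def by (rule N1_iter[OF G])
    finally have b: "\<bar>((Lop n w r \<gamma> ^^ m) u) i\<bar> \<le> M ^ m * N1 n u" .
    have "\<bar>t m\<bar> = \<tau> ^ m / fact m * \<bar>((Lop n w r \<gamma> ^^ m) u) i\<bar>"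
      using tau by (simp add: t_def abs_mult power_abs)
    also have "\<dots> \<le> \<tau> ^ m / fact m * (M ^ m * N1 n u)"
      using b tau by (intro mult_left_mono) auto
    also have "\<dots> = g m" by (simp add: g_def power_mult_distrib)
    finally show ?thesis .
  qed
  have e: "(\<lambda>m. (\<tau> * M) ^ m / fact m) sums exp (\<tau> * M)"
    using exp_converges[of "\<tau> * M"] by (simp add: divide_inverse mult.commute)
  have gs: "g sums (exp (\<tau> * M) * N1 n u)" unfolding g_def by (rule sums_mult2[OF e])
  have ts: "summable t" by (rule summable_comparison_test'[OF sums_summable[OF gs]]) (use tg in auto)
  have t0: "t 0 = u i" by (simp add: t_def)
  have g0: "g 0 = N1 n u" by (simp add: g_def)
  have ex: "expL n w r \<gamma> \<tau> u i = suminf t" unfolding expL_def t_def[abs_def] by simp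
  have "expL n w r \<gamma> \<tau> u i - u i = (\<Sum>m. t (Suc m))"
    using suminf_split_head[OF ts] ex t0 by simp
  moreover have "\<bar>\<Sum>m. t (Suc m)\<bar> \<le> (\<Sum>m. g (Suc m))"
  proof -
    have sa: "summable (\<lambda>m. \<bar>t (Suc m)\<bar>)"
      by (rule summable_comparison_test'[of "\<lambda>m. g (Suc m)"])
        (use sums_summable[OF gs] tg in \<open>auto simp: summable_Suc_iff\<close>)
    have "\<bar>\<Sum>m. t (Suc m)\<bar> \<le> (\<Sum>m. \<bar>t (Suc m)\<bar>)" by (rule summable_rabs[OF sa])
    also have "\<dots> \<le> (\<Sum>m. g (Suc m))"
      by (rule suminf_le) (use tg sa sums_summable[OF gs] in \<open>auto simp: summable_Suc_iff\<close>)
    finally show ?thesis .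
  qed
  moreover have "(\<Sum>m. g (Suc m)) = exp (\<tau> * M) * N1 n u - N1 n u"
    using suminf_split_head[OF sums_summable[OF gs]] sums_unique[OF gs] g0 by simp
  ultimately show ?thesis by (simp add: M_def algebra_simps)
qed


theorem theorem5p23:
  fixes n :: nat and w :: "nat \<Rightarrow> nat \<Rightarrow> real" and r \<gamma> C :: real
    and \<tau> :: "nat \<Rightarrow> real" and u :: "nat \<Rightarrow> nat \<Rightarrow> real"
  assumes "graph_G n w"
    and "0 \<le> r" "r \<le> 1"
    and "\<gamma> \<ge> 0"
    and "\<forall>k. \<tau> k > 0"
    and "\<tau> \<longlonglongrightarrow> 0"
    and "\<forall>k. u k \<in> K_set n"
    and "C > 0"
    and "\<forall>k. J_tilde n w r \<gamma> (\<tau> k) (u k) \<le> C"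
  shows "\<exists>s v. strict_mono s \<and> v \<in> Vb_set n
           \<and> ((\<lambda>l. norm_V n w r (\<lambda>i. u (s l) i - v i)) \<longlonglongrightarrow> 0)"
proof -
  note G = assms(1)
  have tpos: "\<And>k. \<tau> k > 0" using assms(5) by blast
  have u01: "\<And>k i. i \<in> Vset n \<Longrightarrow> 0 \<le> u k i \<and> u k i \<le> 1" using assms(7) by (auto simp: K_set_def)
  define M where "M = MM n w r \<gamma>"
  define D where "D = (\<Sum>i\<in>Vset n. deg n w i powr r)"
  define Q where "Q k = (\<Sum>i\<in>Vset n. deg n w i powr r * ((1 - u k i) * u k i))" for k
  define R where "R k = \<tau> k * C + D * ((exp (\<tau> k * M) - 1) * real n)" for k
  have Q0: "Q k \<ge> 0" for k
    unfolding Q_def using u01 dpow_pos[OF G] by (intro sum_nonneg mult_nonneg_nonneg) auto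
  have QR: "Q k \<le> R k" for k
  proof -
    let ?e = "expL n w r \<gamma> (\<tau> k) (u k)"
    have N1u: "N1 n (u k) \<le> real n"
    proof -
      have "N1 n (u k) \<le> (\<Sum>i\<in>Vset n. 1)" unfolding N1_def
        using u01 by (intro sum_mono) fastforce
      then show ?thesis by (simp add: Vset_def)
    qed
    have E0: "exp (\<tau> k * M) - 1 \<ge> 0"
      using tpos[of k] MM_nonneg[OF G, of r \<gamma>] by (simp add: M_def)
    have inner_eq: "inner_V n w r (\<lambda>i. indic_V n i - u k i) ?e = \<tau> k * J_tilde n w r \<gamma> (\<tau> k) (u k)"
      using tpos[of k] by (simp add: J_tilde_def)
    have "inner_V n w r (\<lambda>i. indic_V n i - u k i) ?e - Q k
        = (\<Sum>i\<in>Vset n. deg n w i powr r * ((1 - u k i) * (?e i - u k i)))"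
      unfolding inner_V_def Q_def
      by (simp add: sum_subtractf[symmetric] indic_V_def algebra_simps)
    also have "\<dots> \<ge> (\<Sum>i\<in>Vset n. - (deg n w i powr r * ((exp (\<tau> k * M) - 1) * real n)))"
    proof (rule sum_mono)
      fix i assume i: "i \<in> Vset n"
      have "\<bar>?e i - u k i\<bar> \<le> (exp (\<tau> k * M) - 1) * N1 n (u k)"
        using expL_close[OF G i, of "\<tau> k"] tpos[of k] by (simp add: M_def)
      also have "\<dots> \<le> (exp (\<tau> k * M) - 1) * real n"
        using N1u E0 by (intro mult_left_mono) auto
      finally have a: "\<bar>?e i - u k i\<bar> \<le> (exp (\<tau> k * M) - 1) * real n" .
      have "\<bar>(1 - u k i) * (?e i - u k i)\<bar> \<le> 1 * \<bar>?e i - u k i\<bar>"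
        unfolding abs_mult using u01[OF i, of k] by (intro mult_right_mono) auto
      with a have "\<bar>(1 - u k i) * (?e i - u k i)\<bar> \<le> (exp (\<tau> k * M) - 1) * real n" by simp
      then have b: "(1 - u k i) * (?e i - u k i) \<ge> - ((exp (\<tau> k * M) - 1) * real n)" by linarith
      show "- (deg n w i powr r * ((exp (\<tau> k * M) - 1) * real n))
          \<le> deg n w i powr r * ((1 - u k i) * (?e i - u k i))"
        using mult_left_mono[OF b, of "deg n w i powr r"] dpow_pos[OF G i, of r] by simp
    qed
    also have "(\<Sum>i\<in>Vset n. - (deg n w i powr r * ((exp (\<tau> k * M) - 1) * real n)))
        = - (D * ((exp (\<tau> k * M) - 1) * real n))"
      by (simp add: D_def sum_negf sum_distrib_right)
    finally have "Q k \<le> inner_V n w r (\<lambda>i. indic_V n i - u k i) ?e + D * ((exp (\<tau> k * M) - 1) * real n)"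
      by linarith
    also have "\<dots> \<le> \<tau> k * C + D * ((exp (\<tau> k * M) - 1) * real n)"
      using inner_eq assms(9) tpos[of k] by (simp add: mult_left_mono)
    finally show ?thesis by (simp add: R_def)
  qed
  have R0: "R \<longlonglongrightarrow> 0"
  proof -
    have "R \<longlonglongrightarrow> 0 * C + D * ((exp (0 * M) - 1) * real n)"
      unfolding R_def by (intro tendsto_intros assms(6))
    then show ?thesis by simp
  qed
  have Qlim: "Q \<longlonglongrightarrow> 0"
    by (rule tendsto_sandwich[OF _ _ tendsto_const R0]) (use Q0 QR in auto)
  obtain s g where s: "strict_mono s" and g: "\<forall>i\<in>Vset n. (\<lambda>l. u (s l) i) \<longlonglongrightarrow> g i"
    using finite_subseq_conv[OF finV[OF G], of u 1] u01 by fastforce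
  have g01: "0 \<le> g i \<and> g i \<le> 1" if i: "i \<in> Vset n" for i
    using g i u01[OF i]
    by (metis (no_types, lifting) LIMSEQ_le_const LIMSEQ_le_const2)
  have "(\<lambda>l. Q (s l)) \<longlonglongrightarrow> (\<Sum>i\<in>Vset n. deg n w i powr r * ((1 - g i) * g i))"
    unfolding Q_def by (intro tendsto_intros) (use g in auto)
  moreover have "(\<lambda>l. Q (s l)) \<longlonglongrightarrow> 0"
    using LIMSEQ_subseq_LIMSEQ[OF Qlim s] by (simp add: o_def)
  ultimately have sum0: "(\<Sum>i\<in>Vset n. deg n w i powr r * ((1 - g i) * g i)) = 0"
    by (rule LIMSEQ_unique)
  have "\<forall>i\<in>Vset n. deg n w i powr r * ((1 - g i) * g i) = 0"
    using sum0 finV[OF G] g01 dpow_pos[OF G]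
    by (subst (asm) sum_nonneg_eq_0_iff) (auto intro!: mult_nonneg_nonneg)
  then have "g \<in> Vb_set n"
    using dpow_pos[OF G] unfolding Vb_set_def by auto
  moreover have "(\<lambda>l. norm_V n w r (\<lambda>i. u (s l) i - g i)) \<longlonglongrightarrow> 0"
  proof -
    have "(\<lambda>l. norm_V n w r (\<lambda>i. u (s l) i - g i)) \<longlonglongrightarrow>
        sqrt (\<Sum>i\<in>Vset n. deg n w i powr r * (g i - g i) * (g i - g i))"
      unfolding norm_V_def inner_V_def by (intro tendsto_intros) (use g in auto)
    then show ?thesis by simp
  qed
  ultimately show ?thesis using s by blast
qed

end
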